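(* Let $N\ge2$, $\alpha,\beta>0$, $W:\mathbb{R}^2\to\mathbb{R}$, $W(x)=U(|x|)$ twice continuously differentiable, and let $\hat x\in\mathbb{R}^{2N}$ satisfy: (H1) $\sum_{j\ne i}\nabla W(\hat x_i-\hat x_j)=0$ for all $i$; (H2) the kernel of $G=G(\hat x)$ is exactly three-dimensional, spanned by $w_1=1_N\otimes(1,0)^T$, $w_2=1_N\otimes(0,1)^T$, $w_3=\bigl(I_N\otimes\begin{pmatrix}0&-1\\1&0\end{pmatrix}\bigr)\hat x$; (H3) every non-zero eigenvalue of $G$ has negative real part; (H4) $\hat x_1,\dots,\hat x_N$ are not all collinear. Let $m_0\in\mathbb{R}^2$ with $|m_0|^2=\alpha/\beta$ and define the $4N\times4N$ matrix $$F_B^B=\begin{pmatrix}0_{2N\times2N} & \begin{pmatrix}I_{2N-2}\\ -1_{N-1}^T\otimes I_2\end{pmatrix} & 0_{2N\times2}\\ \lceil G\rceil & -I_{N-1}\otimes 2\beta\, m_0m_0^T & 0_{(2N-2)\times2}\\ 0_{2\times2N}&0_{2\times(2N-2)}&-2\beta\, m_0m_0^T\end{pmatrix}.$$ Then $F_B^B$ has no generalized eigenvector for the eigenvalue $0$, i.e. $\ker (F_B^B)^2=\ker F_B^B$.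
   Context: $G(\hat x)\in\mathbb{R}^{2N\times2N}$ is the Jacobian of the system $\dot x_i=-\sum_{j\ne i}\nabla W(x_i-x_j)$ at $\hat x$: it has $2\times2$ blocks $G_{ii}=-\sum_{j\ne i}\operatorname{Hess}W(\hat x_i-\hat x_j)$ and $G_{ij}=\operatorname{Hess}W(\hat x_i-\hat x_j)$ for $i\ne j$. $\lceil G\rceil$ is the $(2N-2)\times2N$ matrix obtained from $G$ by deleting its last two rows. $1_n$ is the all-ones column vector, $0_{n\times p}$ the zero matrix, $\otimes$ the Kronecker product. ($F_B^B$ is the linearization of the second-order swarming model at a flock, written in mean-velocity coordinates and restricted to mean-velocity-consistent perturbations.) *)

theory Defs
  imports "HOL-Analysis.Analysis" "Jordan_Normal_Form.Matrix_Kernel" "Jordan_Normal_Form.Char_Poly"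
begin

definition comp2 :: "real \<times> real \<Rightarrow> nat \<Rightarrow> real" where
  "comp2 p a = (if a = 0 then fst p else snd p)"

definition e2 :: "nat \<Rightarrow> real \<times> real" where
  "e2 b = (if b = 0 then (1, 0) else (0, 1))"

definition hess_entry :: "(real \<times> real \<Rightarrow> real \<times> real \<Rightarrow> real \<times> real) \<Rightarrow> real \<times> real \<Rightarrow> nat \<Rightarrow> nat \<Rightarrow> real" where
  "hess_entry D2W x a b = comp2 (D2W x (e2 b)) a"

definition C2_grad_hess :: "(real \<times> real \<Rightarrow> real) \<Rightarrow> (real \<times> real \<Rightarrow> real \<times> real)
     \<Rightarrow> (real \<times> real \<Rightarrow> real \<times> real \<Rightarrow> real \<times> real) \<Rightarrow> bool" where
  "C2_grad_hess W gradW D2W \<longleftrightarrow>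
     (\<forall>x. (W has_derivative (\<lambda>h. fst (gradW x) * fst h + snd (gradW x) * snd h)) (at x)) \<and>
     (\<forall>x. (gradW has_derivative D2W x) (at x)) \<and>
     (\<forall>h. continuous_on UNIV (\<lambda>x. D2W x h))"

(* Jacobian G(xh) in R^{2N x 2N}; index 2*i+a corresponds to component a of particle i (i < N). *)
definition Gmat :: "nat \<Rightarrow> (real \<times> real \<Rightarrow> real \<times> real \<Rightarrow> real \<times> real) \<Rightarrow> (nat \<Rightarrow> real \<times> real) \<Rightarrow> real mat" where
  "Gmat N D2W xh = mat (2*N) (2*N) (\<lambda>(r, c).
      let i = r div 2; a = r mod 2; j = c div 2; b = c mod 2 in
      if i = j then - (\<Sum>k\<in>{0..<N} - {i}. hess_entry D2W (xh i - xh k) a b)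
      else hess_entry D2W (xh i - xh j) a b)"

definition w1 :: "nat \<Rightarrow> real vec" where
  "w1 N = vec (2*N) (\<lambda>r. if r mod 2 = 0 then 1 else 0)"
definition w2 :: "nat \<Rightarrow> real vec" where
  "w2 N = vec (2*N) (\<lambda>r. if r mod 2 = 0 then 0 else 1)"
definition w3 :: "nat \<Rightarrow> (nat \<Rightarrow> real \<times> real) \<Rightarrow> real vec" where
  "w3 N xh = vec (2*N) (\<lambda>r. if r mod 2 = 0 then - snd (xh (r div 2)) else fst (xh (r div 2)))"

(* The 4N x 4N matrix F_B^B.  Column/row blocks: [0,2N), [2N,4N-2), [4N-2,4N). *)
definition FBB :: "nat \<Rightarrow> real mat \<Rightarrow> real \<Rightarrow> real \<times> real \<Rightarrow> real mat" where
  "FBB N G \<beta> m0 = mat (4*N) (4*N) (\<lambda>(r, c).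
     let mm = (\<lambda>a b. 2 * \<beta> * comp2 m0 a * comp2 m0 b) in
     if r < 2*N then
       (if 2*N \<le> c \<and> c < 4*N - 2 then
          (let c' = c - 2*N in
            if r < 2*N - 2 then (if r = c' then 1 else 0)
            else (if r mod 2 = c' mod 2 then -1 else 0))
        else 0)
     else if r < 4*N - 2 then
       (let r' = r - 2*N in
         if c < 2*N then G $$ (r', c)
         else if c < 4*N - 2 then
           (let c' = c - 2*N in
             if r' div 2 = c' div 2 then - mm (r' mod 2) (c' mod 2) else 0)
         else 0)
     else
       (if 4*N - 2 \<le> c then - mm (r - (4*N - 2)) (c - (4*N - 2)) else 0))"

end

theory Submission
  imports Defs
begin

no_notation vec_nth (infixl \<open>$\<close> 90)


lemma mixed_step:
  fixes W :: "real \<times> real \<Rightarrow> real" and g :: "real \<times> real \<Rightarrow> real \<times> real"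
    and D :: "real \<times> real \<Rightarrow> real \<times> real \<Rightarrow> real \<times> real"
  assumes dW: "\<And>y. (W has_derivative (\<lambda>h. fst (g y) * fst h + snd (g y) * snd h)) (at y)"
    and dg: "\<And>y. (g has_derivative D y) (at y)"
    and t: "t > 0"
  shows "\<exists>p q. norm (p - x) \<le> 2*t \<and> norm (q - x) \<le> 2*t \<and> fst (D p (0,1)) = snd (D q (1,0))"
proof -
  define \<Delta> where "\<Delta> = W (x + (t,t)) - W (x + (t,0)) - W (x + (0,t)) + W x"
  have dWc: "((\<lambda>u. W (x + (u, s))) has_field_derivative fst (g (x + (u,s)))) (at u)" for u s
  proof -
    have "((\<lambda>u. x + (u, s)) has_derivative (\<lambda>h. (h, 0))) (at u)"
      by (auto intro!: derivative_eq_intros simp: prod_eq_iff)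
    from has_derivative_compose[OF this dW]
    show ?thesis unfolding has_field_derivative_def by (rule has_derivative_eq_rhs) (auto simp: fun_eq_iff)
  qed
  have dWr: "((\<lambda>v. W (x + (s, v))) has_field_derivative snd (g (x + (s,v)))) (at v)" for v s
  proof -
    have "((\<lambda>v. x + (s, v)) has_derivative (\<lambda>h. (0, h))) (at v)"
      by (auto intro!: derivative_eq_intros simp: prod_eq_iff)
    from has_derivative_compose[OF this dW]
    show ?thesis unfolding has_field_derivative_def by (rule has_derivative_eq_rhs) (auto simp: fun_eq_iff)
  qed
  have dgc: "((\<lambda>u. snd (g (x + (u, s)))) has_field_derivative snd (D (x + (u,s)) (1,0))) (at u)" for u s
  proof -
    have "((\<lambda>u. x + (u, s)) has_derivative (\<lambda>h. (h, 0))) (at u)"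
      by (auto intro!: derivative_eq_intros simp: prod_eq_iff)
    from has_derivative_compose[OF this dg]
    have "((\<lambda>u. g (x + (u, s))) has_derivative (\<lambda>h. D (x + (u,s)) (h,0))) (at u)" .
    from has_derivative_snd[OF this]
    have 1: "((\<lambda>u. snd (g (x + (u, s)))) has_derivative (\<lambda>h. snd (D (x + (u,s)) (h,0)))) (at u)" .
    have lin: "linear (D (x + (u,s)))" using dg has_derivative_linear by blast
    have e: "(\<lambda>h. snd (D (x + (u,s)) (h,0))) = (*) (snd (D (x + (u,s)) (1,0)))"
    proof
      fix h :: real
      have "D (x + (u,s)) (h,0) = h *\<^sub>R D (x + (u,s)) (1,0)"
        using linear_scale[OF lin, of h "(1,0)"] by simp
      then show "snd (D (x + (u,s)) (h,0)) = snd (D (x + (u,s)) (1,0)) * h" by simp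
    qed
    from 1 show ?thesis unfolding has_field_derivative_def using e by simp
  qed
  have dgr: "((\<lambda>v. fst (g (x + (s, v)))) has_field_derivative fst (D (x + (s,v)) (0,1))) (at v)" for v s
  proof -
    have "((\<lambda>v. x + (s, v)) has_derivative (\<lambda>h. (0, h))) (at v)"
      by (auto intro!: derivative_eq_intros simp: prod_eq_iff)
    from has_derivative_compose[OF this dg]
    have "((\<lambda>v. g (x + (s, v))) has_derivative (\<lambda>h. D (x + (s,v)) (0,h))) (at v)" .
    from has_derivative_fst[OF this]
    have 1: "((\<lambda>v. fst (g (x + (s, v)))) has_derivative (\<lambda>h. fst (D (x + (s,v)) (0,h)))) (at v)" .
    have lin: "linear (D (x + (s,v)))" using dg has_derivative_linear by blast
    have e: "(\<lambda>h. fst (D (x + (s,v)) (0,h))) = (*) (fst (D (x + (s,v)) (0,1)))"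
    proof
      fix h :: real
      have "D (x + (s,v)) (0,h) = h *\<^sub>R D (x + (s,v)) (0,1)"
        using linear_scale[OF lin, of h "(0,1)"] by simp
      then show "fst (D (x + (s,v)) (0,h)) = fst (D (x + (s,v)) (0,1)) * h" by simp
    qed
    from 1 show ?thesis unfolding has_field_derivative_def using e by simp
  qed
  have "\<exists>z. 0 < z \<and> z < t \<and> ((\<lambda>u. W (x + (u, t)) - W (x + (u, 0))) t - (\<lambda>u. W (x + (u, t)) - W (x + (u, 0))) 0
      = (t - 0) * (fst (g (x + (z,t))) - fst (g (x + (z,0)))))"
    by (rule MVT2[OF t]) (auto intro!: DERIV_diff dWc)
  then obtain \<xi> where \<xi>: "0 < \<xi>" "\<xi> < t" "\<Delta> = t * (fst (g (x + (\<xi>,t))) - fst (g (x + (\<xi>,0))))"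
    by (auto simp: \<Delta>_def zero_prod_def[symmetric] algebra_simps)
  have "\<exists>z. 0 < z \<and> z < t \<and> fst (g (x + (\<xi>, t))) - fst (g (x + (\<xi>, 0))) = (t - 0) * fst (D (x + (\<xi>,z)) (0,1))"
    by (rule MVT2[OF t]) (auto intro!: dgr)
  then obtain \<eta> where \<eta>: "0 < \<eta>" "\<eta> < t" "\<Delta> = t * t * fst (D (x + (\<xi>,\<eta>)) (0,1))"
    using \<xi> by auto
  have "\<exists>z. 0 < z \<and> z < t \<and> ((\<lambda>v. W (x + (t, v)) - W (x + (0, v))) t - (\<lambda>v. W (x + (t, v)) - W (x + (0, v))) 0
      = (t - 0) * (snd (g (x + (t,z))) - snd (g (x + (0,z)))))"
    by (rule MVT2[OF t]) (auto intro!: DERIV_diff dWr)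
  then obtain \<xi>' where \<xi>': "0 < \<xi>'" "\<xi>' < t" "\<Delta> = t * (snd (g (x + (t,\<xi>'))) - snd (g (x + (0,\<xi>'))))"
    by (auto simp: \<Delta>_def zero_prod_def[symmetric] algebra_simps)
  have "\<exists>z. 0 < z \<and> z < t \<and> snd (g (x + (t, \<xi>'))) - snd (g (x + (0, \<xi>'))) = (t - 0) * snd (D (x + (z,\<xi>')) (1,0))"
    by (rule MVT2[OF t]) (auto intro!: dgc)
  then obtain \<eta>' where \<eta>': "0 < \<eta>'" "\<eta>' < t" "\<Delta> = t * t * snd (D (x + (\<eta>',\<xi>')) (1,0))"
    using \<xi>' by auto
  have eq: "fst (D (x + (\<xi>,\<eta>)) (0,1)) = snd (D (x + (\<eta>',\<xi>')) (1,0))"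
    using \<eta>(3) \<eta>'(3) t by simp
  have n1: "norm ((x + (a,b)) - x) \<le> 2*t" if "0 < a" "a < t" "0 < b" "b < t" for a b :: real
  proof -
    have "norm ((x + (a,b)) - x) = norm (a,b)" by simp
    also have "\<dots> \<le> norm (a,0::real) + norm (0::real,b)"
      using norm_triangle_ineq[of "(a,0::real)" "(0::real,b)"] by simp
    also have "\<dots> \<le> 2*t" using that by (simp add: norm_Pair)
    finally show ?thesis .
  qed
  show ?thesis
    using eq n1[OF \<xi>(1,2) \<eta>(1,2)] n1[OF \<eta>'(1,2) \<xi>'(1,2)] by blast
qed

lemma mixed_sym:
  fixes W :: "real \<times> real \<Rightarrow> real" and g :: "real \<times> real \<Rightarrow> real \<times> real"
    and D :: "real \<times> real \<Rightarrow> real \<times> real \<Rightarrow> real \<times> real"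
  assumes dW: "\<And>y. (W has_derivative (\<lambda>h. fst (g y) * fst h + snd (g y) * snd h)) (at y)"
    and dg: "\<And>y. (g has_derivative D y) (at y)"
    and cont: "\<And>h. continuous_on UNIV (\<lambda>y. D y h)"
  shows "fst (D x (0,1)) = snd (D x (1,0))"
proof -
  have "\<forall>n. \<exists>p q. norm (p - x) \<le> 2*inverse (real (Suc n)) \<and> norm (q - x) \<le> 2*inverse (real (Suc n))
       \<and> fst (D p (0,1)) = snd (D q (1,0))"
    using mixed_step[OF dW dg] by simp
  then obtain p q where pq: "\<And>n. norm (p n - x) \<le> 2*inverse (real (Suc n))"
     "\<And>n. norm (q n - x) \<le> 2*inverse (real (Suc n))" "\<And>n. fst (D (p n) (0,1)) = snd (D (q n) (1,0))"
    by metis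
  have z: "(\<lambda>n. 2*inverse (real (Suc n))) \<longlonglongrightarrow> 0"
    using tendsto_mult_right_zero[OF LIMSEQ_inverse_real_of_nat, of 2] by simp
  have conv: "r \<longlonglongrightarrow> x" if "\<And>n. norm (r n - x) \<le> 2*inverse (real (Suc n))" for r
  proof -
    have "(\<lambda>n. r n - x) \<longlonglongrightarrow> 0"
      by (rule Lim_null_comparison[OF _ z]) (use that in auto)
    from tendsto_add[OF this tendsto_const[of x]] show ?thesis by simp
  qed
  have ic: "isCont (\<lambda>y. D y h) x" for h
    using cont[of h] continuous_on_eq_continuous_at open_UNIV by blast
  have 1: "(\<lambda>n. fst (D (p n) (0,1))) \<longlonglongrightarrow> fst (D x (0,1))"
    by (intro tendsto_fst isCont_tendsto_compose[OF ic[of "(0,1)"]] conv pq)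
  have 2: "(\<lambda>n. fst (D (p n) (0,1))) \<longlonglongrightarrow> snd (D x (1,0))"
    unfolding pq(3) by (intro tendsto_snd isCont_tendsto_compose[OF ic[of "(1,0)"]] conv pq)
  show ?thesis using LIMSEQ_unique[OF 1 2] .
qed

lemma grad_odd:
  fixes W :: "real \<times> real \<Rightarrow> real" and g :: "real \<times> real \<Rightarrow> real \<times> real"
  assumes dW: "\<And>y. (W has_derivative (\<lambda>h. fst (g y) * fst h + snd (g y) * snd h)) (at y)"
    and ev: "\<And>y. W (- y) = W y"
  shows "g (- x) = - g x"
proof -
  have 1: "((\<lambda>y. W (- y)) has_derivative (\<lambda>h. fst (g (-x)) * fst (-h) + snd (g (-x)) * snd (-h))) (at x)"
    using has_derivative_compose[OF has_derivative_minus[OF has_derivative_ident] dW] by simp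
  have "(\<lambda>y. W (- y)) = W" using ev by auto
  with 1 have "(W has_derivative (\<lambda>h. fst (g (-x)) * fst (-h) + snd (g (-x)) * snd (-h))) (at x)" by simp
  from has_derivative_unique[OF dW this]
  have e: "\<And>h. fst (g x) * fst h + snd (g x) * snd h = fst (g (-x)) * fst (-h) + snd (g (-x)) * snd (-h)"
    by metis
  from e[of "(1,0)"] e[of "(0,1)"] show ?thesis by (simp add: prod_eq_iff)
qed

lemma hess_even:
  fixes g :: "real \<times> real \<Rightarrow> real \<times> real" and D :: "real \<times> real \<Rightarrow> real \<times> real \<Rightarrow> real \<times> real"
  assumes dg: "\<And>y. (g has_derivative D y) (at y)"
    and odd: "\<And>y. g (- y) = - g y"
  shows "D (- x) h = D x h"
proof -
  have 1: "((\<lambda>y. - g (- y)) has_derivative (\<lambda>h. - D (-x) (- h))) (at x)"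
    using has_derivative_minus[OF has_derivative_compose[OF has_derivative_minus[OF has_derivative_ident] dg]] by simp
  have "(\<lambda>y. - g (- y)) = g" using odd by (auto simp: fun_eq_iff)
  with 1 have "(g has_derivative (\<lambda>h. - D (-x) (- h))) (at x)" by simp
  from has_derivative_unique[OF dg this] have "D x h = - D (-x) (- h)" by metis
  also have "\<dots> = D (-x) h"
    using linear_neg[OF has_derivative_linear[OF dg[of "-x"]]] by simp
  finally show ?thesis by simp
qed




lemma sum2: "(\<Sum>r<2*(n::nat). f r) = (\<Sum>i<n. f (2*i) + f (2*i+1))"
  by (induction n) (auto simp: add.assoc)

lemma sum_split: "(\<Sum>c<p+(q::nat). f c) = (\<Sum>c<p. f c) + (\<Sum>k<q. f (p+k))"
  by (induction q) (auto simp: add.assoc)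

lemma mv_sum: "A \<in> carrier_mat n m \<Longrightarrow> v \<in> carrier_vec m \<Longrightarrow> i < n \<Longrightarrow>
  (A *\<^sub>v v) $ i = (\<Sum>c<m. A $$ (i,c) * v $ c)"
  by (auto simp: scalar_prod_def atLeast0LessThan intro!: sum.cong)

lemma F_carrier: "FBB N G \<beta> m0 \<in> carrier_mat (4*N) (4*N)"
  by (simp add: FBB_def)

lemma Fw_split:
  assumes w: "w \<in> carrier_vec (4*Suc M)" and r: "r < 4*Suc M"
  shows "(FBB (Suc M) G \<beta> m0 *\<^sub>v w) $ r =
     (\<Sum>c<2*M+2. FBB (Suc M) G \<beta> m0 $$ (r,c) * w $ c)
   + (\<Sum>i<M. FBB (Suc M) G \<beta> m0 $$ (r,2*M+2+2*i) * w $ (2*M+2+2*i)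
          + FBB (Suc M) G \<beta> m0 $$ (r,2*M+2+2*i+1) * w $ (2*M+2+2*i+1))
   + FBB (Suc M) G \<beta> m0 $$ (r,4*M+2) * w $ (4*M+2)
   + FBB (Suc M) G \<beta> m0 $$ (r,4*M+3) * w $ (4*M+3)"
proof -
  have e: "4*Suc M = (2*M+2) + 2*M + 2" by simp
  show ?thesis
    unfolding mv_sum[OF F_carrier w r] e sum_split sum2
    by (simp add: sum.lessThan_Suc algebra_simps numeral_eq_Suc)
qed

lemma F_idx: "r < 4*N \<Longrightarrow> c < 4*N \<Longrightarrow> FBB N G \<beta> m0 $$ (r,c) =
     (let mm = (\<lambda>a b. 2 * \<beta> * comp2 m0 a * comp2 m0 b) in
     if r < 2*N then
       (if 2*N \<le> c \<and> c < 4*N - 2 then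
          (let c' = c - 2*N in
            if r < 2*N - 2 then (if r = c' then 1 else 0)
            else (if r mod 2 = c' mod 2 then -1 else 0))
        else 0)
     else if r < 4*N - 2 then
       (let r' = r - 2*N in
         if c < 2*N then G $$ (r', c)
         else if c < 4*N - 2 then
           (let c' = c - 2*N in
             if r' div 2 = c' div 2 then - mm (r' mod 2) (c' mod 2) else 0)
         else 0)
     else
       (if 4*N - 2 \<le> c then - mm (r - (4*N - 2)) (c - (4*N - 2)) else 0))"
  by (simp add: FBB_def)

lemma E1: "r < 2*M \<Longrightarrow> c < 2*M+2 \<Longrightarrow> FBB (Suc M) G \<beta> m0 $$ (r,c) = 0"
  "r < 2*M \<Longrightarrow> k < 2*M \<Longrightarrow> FBB (Suc M) G \<beta> m0 $$ (r,2*M+2+k) = (if k = r then 1 else 0)"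
  "r < 2*M \<Longrightarrow> b < 2 \<Longrightarrow> FBB (Suc M) G \<beta> m0 $$ (r,4*M+2+b) = 0"
  by (auto simp: F_idx Let_def)

lemma E2: "a < 2 \<Longrightarrow> c < 2*M+2 \<Longrightarrow> FBB (Suc M) G \<beta> m0 $$ (2*M+a,c) = 0"
  "a < 2 \<Longrightarrow> i < M \<Longrightarrow> b < 2 \<Longrightarrow> FBB (Suc M) G \<beta> m0 $$ (2*M+a,2*M+2+2*i+b) = (if b = a then -1 else 0)"
  "a < 2 \<Longrightarrow> b < 2 \<Longrightarrow> FBB (Suc M) G \<beta> m0 $$ (2*M+a,4*M+2+b) = 0"
  by (auto simp: F_idx Let_def)

lemma E3: "i < M \<Longrightarrow> a < 2 \<Longrightarrow> c < 2*M+2 \<Longrightarrow> FBB (Suc M) G \<beta> m0 $$ (2*M+2+2*i+a,c) = G $$ (2*i+a, c)"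
  "i < M \<Longrightarrow> a < 2 \<Longrightarrow> j < M \<Longrightarrow> b < 2 \<Longrightarrow> FBB (Suc M) G \<beta> m0 $$ (2*M+2+2*i+a,2*M+2+2*j+b)
      = (if j = i then - (2 * \<beta> * comp2 m0 a * comp2 m0 b) else 0)"
  "i < M \<Longrightarrow> a < 2 \<Longrightarrow> b < 2 \<Longrightarrow> FBB (Suc M) G \<beta> m0 $$ (2*M+2+2*i+a,4*M+2+b) = 0"
  by (auto simp: F_idx Let_def)

lemma E4: "a < 2 \<Longrightarrow> c < 2*M+2 \<Longrightarrow> FBB (Suc M) G \<beta> m0 $$ (4*M+2+a,c) = 0"
  "a < 2 \<Longrightarrow> i < M \<Longrightarrow> b < 2 \<Longrightarrow> FBB (Suc M) G \<beta> m0 $$ (4*M+2+a,2*M+2+2*i+b) = 0"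
  "a < 2 \<Longrightarrow> b < 2 \<Longrightarrow> FBB (Suc M) G \<beta> m0 $$ (4*M+2+a,4*M+2+b) = - (2 * \<beta> * comp2 m0 a * comp2 m0 b)"
  by (auto simp: F_idx Let_def)

lemma R1: assumes w: "w \<in> carrier_vec (4*Suc M)" and r: "r < 2*M"
  shows "(FBB (Suc M) G \<beta> m0 *\<^sub>v w) $ r = w $ (2*M+2+r)"
proof -
  have "(FBB (Suc M) G \<beta> m0 *\<^sub>v w) $ r = (\<Sum>c<4*Suc M. FBB (Suc M) G \<beta> m0 $$ (r,c) * w $ c)"
    using mv_sum[OF F_carrier w] r by simp
  also have "\<dots> = (\<Sum>c<4*Suc M. if c = 2*M+2+r then w $ c else 0)"
    using r by (intro sum.cong) (auto simp: F_idx Let_def)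
  also have "\<dots> = w $ (2*M+2+r)" using r by (simp add: sum.delta)
  finally show ?thesis .
qed

lemma R2: assumes w: "w \<in> carrier_vec (4*Suc M)" and a: "a < 2"
  shows "(FBB (Suc M) G \<beta> m0 *\<^sub>v w) $ (2*M+a) = - (\<Sum>i<M. w $ (2*M+2+2*i+a))"
proof -
  have "(\<Sum>c<2*M+2. FBB (Suc M) G \<beta> m0 $$ (2*M+a,c) * w $ c) = 0"
    using a E2(1)[OF a] by (intro sum.neutral) auto
  moreover have "(\<Sum>i<M. FBB (Suc M) G \<beta> m0 $$ (2*M+a,2*M+2+2*i) * w $ (2*M+2+2*i)
          + FBB (Suc M) G \<beta> m0 $$ (2*M+a,2*M+2+2*i+1) * w $ (2*M+2+2*i+1))
     = (\<Sum>i<M. - w $ (2*M+2+2*i+a))"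
  proof (intro sum.cong refl)
    fix i assume "i \<in> {..<M}"
    then have i: "i < M" by simp
    show "FBB (Suc M) G \<beta> m0 $$ (2*M+a,2*M+2+2*i) * w $ (2*M+2+2*i)
          + FBB (Suc M) G \<beta> m0 $$ (2*M+a,2*M+2+2*i+1) * w $ (2*M+2+2*i+1) = - w $ (2*M+2+2*i+a)"
      using E2(2)[OF a i, where b=0] E2(2)[OF a i, where b=1] a by (cases a) auto
  qed
  moreover have "FBB (Suc M) G \<beta> m0 $$ (2*M+a,4*M+2) = 0" "FBB (Suc M) G \<beta> m0 $$ (2*M+a,4*M+3) = 0"
    using E2(3)[OF a, where b=0] E2(3)[OF a, where b=1] by (simp_all add: numeral_eq_Suc)
  ultimately show ?thesis using a by (simp add: Fw_split[OF w] sum_negf)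
qed

lemma R3: assumes w: "w \<in> carrier_vec (4*Suc M)" and a: "a < 2" and i: "i < M"
  shows "(FBB (Suc M) G \<beta> m0 *\<^sub>v w) $ (2*M+2+2*i+a) = (\<Sum>c<2*M+2. G $$ (2*i+a,c) * w $ c)
     - (2 * \<beta> * comp2 m0 a * comp2 m0 0 * w $ (2*M+2+2*i) + 2 * \<beta> * comp2 m0 a * comp2 m0 1 * w $ (2*M+2+2*i+1))"
proof -
  have "(\<Sum>c<2*M+2. FBB (Suc M) G \<beta> m0 $$ (2*M+2+2*i+a,c) * w $ c) = (\<Sum>c<2*M+2. G $$ (2*i+a,c) * w $ c)"
    using a i E3(1)[OF i a] by (intro sum.cong) auto
  moreover have "(\<Sum>j<M. FBB (Suc M) G \<beta> m0 $$ (2*M+2+2*i+a,2*M+2+2*j) * w $ (2*M+2+2*j)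
          + FBB (Suc M) G \<beta> m0 $$ (2*M+2+2*i+a,2*M+2+2*j+1) * w $ (2*M+2+2*j+1))
     = (\<Sum>j<M. if j = i then - (2 * \<beta> * comp2 m0 a * comp2 m0 0 * w $ (2*M+2+2*i) + 2 * \<beta> * comp2 m0 a * comp2 m0 1 * w $ (2*M+2+2*i+1)) else 0)"
  proof (intro sum.cong refl)
    fix j assume "j \<in> {..<M}"
    then have j: "j < M" by simp
    show "FBB (Suc M) G \<beta> m0 $$ (2*M+2+2*i+a,2*M+2+2*j) * w $ (2*M+2+2*j)
          + FBB (Suc M) G \<beta> m0 $$ (2*M+2+2*i+a,2*M+2+2*j+1) * w $ (2*M+2+2*j+1) =
          (if j = i then - (2 * \<beta> * comp2 m0 a * comp2 m0 0 * w $ (2*M+2+2*i) + 2 * \<beta> * comp2 m0 a * comp2 m0 1 * w $ (2*M+2+2*i+1)) else 0)"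
      using E3(2)[OF i a j, where b=0] E3(2)[OF i a j, where b=1] by auto
  qed
  moreover have "FBB (Suc M) G \<beta> m0 $$ (2*M+2+2*i+a,4*M+2) = 0" "FBB (Suc M) G \<beta> m0 $$ (2*M+2+2*i+a,4*M+3) = 0"
    using E3(3)[OF i a, where b=0] E3(3)[OF i a, where b=1] by (simp_all add: numeral_eq_Suc)
  moreover have "2*M+2+2*i+a < 4*Suc M" using a i by simp
  ultimately show ?thesis using i by (simp add: Fw_split[OF w] sum.delta)
qed

lemma R4: assumes w: "w \<in> carrier_vec (4*Suc M)" and a: "a < 2"
  shows "(FBB (Suc M) G \<beta> m0 *\<^sub>v w) $ (4*M+2+a) =
     - (2 * \<beta> * comp2 m0 a * comp2 m0 0 * w $ (4*M+2) + 2 * \<beta> * comp2 m0 a * comp2 m0 1 * w $ (4*M+3))"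
proof -
  have "(\<Sum>c<2*M+2. FBB (Suc M) G \<beta> m0 $$ (4*M+2+a,c) * w $ c) = 0"
    using a E4(1)[OF a] by (intro sum.neutral) auto
  moreover have "(\<Sum>i<M. FBB (Suc M) G \<beta> m0 $$ (4*M+2+a,2*M+2+2*i) * w $ (2*M+2+2*i)
          + FBB (Suc M) G \<beta> m0 $$ (4*M+2+a,2*M+2+2*i+1) * w $ (2*M+2+2*i+1)) = 0"
    using a E4(2)[OF a _, where b=0] E4(2)[OF a _, where b=1] by (intro sum.neutral) auto
  moreover have "FBB (Suc M) G \<beta> m0 $$ (4*M+2+a,4*M+2) = - (2 * \<beta> * comp2 m0 a * comp2 m0 0)"
     "FBB (Suc M) G \<beta> m0 $$ (4*M+2+a,4*M+3) = - (2 * \<beta> * comp2 m0 a * comp2 m0 1)"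
    using E4(3)[OF a, where b=0] E4(3)[OF a, where b=1] by (simp_all add: numeral_eq_Suc)
  moreover have "4*M+2+a < 4*Suc M" using a by simp
  ultimately show ?thesis by (simp add: Fw_split[OF w])
qed

lemma H_sym: assumes "C2_grad_hess W gradW D2W"
  shows "hess_entry D2W v a b = hess_entry D2W v b a"
proof -
  from assms have dW: "\<And>y. (W has_derivative (\<lambda>h. fst (gradW y) * fst h + snd (gradW y) * snd h)) (at y)"
    and dg: "\<And>y. (gradW has_derivative D2W y) (at y)" and cont: "\<And>h. continuous_on UNIV (\<lambda>y. D2W y h)"
    by (auto simp: C2_grad_hess_def)
  have "fst (D2W v (0,1)) = snd (D2W v (1,0))" by (rule mixed_sym[OF dW dg cont])
  then show ?thesis by (auto simp: hess_entry_def comp2_def e2_def)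
qed

lemma H_even: assumes "C2_grad_hess W gradW D2W" and radial: "\<forall>x. W x = U (norm x)"
  shows "hess_entry D2W (- v) a b = hess_entry D2W v a b"
proof -
  from assms have dW: "\<And>y. (W has_derivative (\<lambda>h. fst (gradW y) * fst h + snd (gradW y) * snd h)) (at y)"
    and dg: "\<And>y. (gradW has_derivative D2W y) (at y)"
    by (auto simp: C2_grad_hess_def)
  have ev: "\<And>y. W (- y) = W y"
  proof -
    fix y :: "real \<times> real"
    have "W (- y) = U (norm (- y))" using radial by blast
    also have "\<dots> = U (norm y)" by simp
    also have "\<dots> = W y" using radial by metis
    finally show "W (- y) = W y" .
  qed
  have "D2W (- v) h = D2W v h" for h
    by (rule hess_even[OF dg grad_odd[OF dW ev]])
  then show ?thesis by (simp add: hess_entry_def)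
qed

lemma G_carrier: "Gmat N D2W xh \<in> carrier_mat (2*N) (2*N)"
  by (simp add: Gmat_def)

lemma G_sym: assumes C2: "C2_grad_hess W gradW D2W" and radial: "\<forall>x. W x = U (norm x)"
    and r: "r < 2*N" and c: "c < 2*N"
  shows "Gmat N D2W xh $$ (r,c) = Gmat N D2W xh $$ (c,r)"
proof (cases "r div 2 = c div 2")
  case True
  then show ?thesis using r c H_sym[OF C2]
    by (simp add: Gmat_def Let_def)
next
  case False
  have "hess_entry D2W (xh (r div 2) - xh (c div 2)) (r mod 2) (c mod 2)
      = hess_entry D2W (xh (c div 2) - xh (r div 2)) (c mod 2) (r mod 2)"
    using H_even[OF C2 radial, of "xh (c div 2) - xh (r div 2)"] H_sym[OF C2] by simp
  then show ?thesis using r c False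
    by (simp add: Gmat_def Let_def)
qed




lemma core:
  fixes G :: "real mat" and M :: nat and \<beta> :: real and m0 :: "real \<times> real" and xh :: "nat \<Rightarrow> real \<times> real"
  assumes Gc: "G \<in> carrier_mat (2*Suc M) (2*Suc M)"
    and Gsym: "\<And>r c. r < 2*Suc M \<Longrightarrow> c < 2*Suc M \<Longrightarrow> G $$ (r,c) = G $$ (c,r)"
    and H2: "mat_kernel G = {a \<cdot>\<^sub>v w1 (Suc M) + b \<cdot>\<^sub>v w2 (Suc M) + c \<cdot>\<^sub>v w3 (Suc M) xh | a b c. True}"
    and H4: "\<not> collinear (xh ` {0..<Suc M})"
    and beta: "\<beta> > 0" and mpos: "(fst m0)\<^sup>2 + (snd m0)\<^sup>2 > 0"
    and v: "v \<in> carrier_vec (4*Suc M)"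
    and vk: "FBB (Suc M) G \<beta> m0 *\<^sub>v (FBB (Suc M) G \<beta> m0 *\<^sub>v v) = 0\<^sub>v (4*Suc M)"
  shows "FBB (Suc M) G \<beta> m0 *\<^sub>v v = 0\<^sub>v (4*Suc M)"
proof -
  define F where "F = FBB (Suc M) G \<beta> m0"
  define m1 where "m1 = fst m0"
  define m2 where "m2 = snd m0"
  have cm: "comp2 m0 0 = m1" "comp2 m0 1 = m2" by (simp_all add: comp2_def m1_def m2_def)
  have Fc: "F \<in> carrier_mat (4*Suc M) (4*Suc M)" unfolding F_def by (rule F_carrier)
  define u where "u = F *\<^sub>v v"
  have u: "u \<in> carrier_vec (4*Suc M)" using Fc v by (simp add: u_def)
  have Fu0: "(F *\<^sub>v u) $ r = 0" if "r < 4*Suc M" for r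
    using vk[folded F_def, folded u_def] that by simp
  have Fv: "(F *\<^sub>v v) $ r = u $ r" for r by (simp add: u_def)
  have uy: "u $ (2*M+2+k) = 0" if "k < 2*M" for k
    using R1[OF u that, of G \<beta> m0, folded F_def] Fu0[of k] that by simp
  have e3: "4*M+2+(1::nat) = 4*M+3" by simp
  have z0: "u $ (4*M+2) = - (2*\<beta>*m1*m1 * v $ (4*M+2) + 2*\<beta>*m1*m2 * v $ (4*M+3))"
    using R4[OF v, of 0 G \<beta> m0, folded F_def] cm by (simp add: u_def)
  have z1: "u $ (4*M+3) = - (2*\<beta>*m2*m1 * v $ (4*M+2) + 2*\<beta>*m2*m2 * v $ (4*M+3))"
    using R4[OF v, of 1 G \<beta> m0, folded F_def, unfolded e3] cm by (simp add: u_def)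
  have fz0: "2*\<beta>*m1*m1 * u $ (4*M+2) + 2*\<beta>*m1*m2 * u $ (4*M+3) = 0"
    using R4[OF u, of 0 G \<beta> m0, folded F_def] cm Fu0[of "4*M+2"] by simp
  have fz1: "2*\<beta>*m2*m1 * u $ (4*M+2) + 2*\<beta>*m2*m2 * u $ (4*M+3) = 0"
  proof -
    have A: "(F *\<^sub>v u) $ (4*M+3) = 0" by (rule Fu0) simp
    have B: "(F *\<^sub>v u) $ (4*M+3) = - (2*\<beta>*m2*m1 * u $ (4*M+2) + 2*\<beta>*m2*m2 * u $ (4*M+3))"
      using R4[OF u, of 1 G \<beta> m0, folded F_def, unfolded e3] cm by simp
    from A B show ?thesis by linarith
  qed
  define sz where "sz = m1 * v $ (4*M+2) + m2 * v $ (4*M+3)"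
  define tz where "tz = m1 * u $ (4*M+2) + m2 * u $ (4*M+3)"
  have tz: "tz = - 2*\<beta>*(m1^2+m2^2) * sz" unfolding tz_def sz_def z0 z1 by (simp add: algebra_simps power2_eq_square)
  have "(2*\<beta>) * (m1 * tz) = 0" using fz0 unfolding tz_def by (simp add: algebra_simps)
  then have "m1 * tz = 0" using beta by simp
  moreover have "(2*\<beta>) * (m2 * tz) = 0" using fz1 unfolding tz_def by (simp add: algebra_simps)
  then have "m2 * tz = 0" using beta by simp
  ultimately have "tz = 0" using mpos by (auto simp: m1_def m2_def)
  then have "sz = 0" using tz beta mpos by (auto simp: m1_def m2_def)
  moreover have "u $ (4*M+2) = -2*\<beta>*m1 * sz" "u $ (4*M+3) = -2*\<beta>*m2 * sz"
    unfolding z0 z1 sz_def by (simp_all add: algebra_simps)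
  ultimately have uz: "u $ (4*M+2) = 0" "u $ (4*M+3) = 0" by simp_all
  have c1: "u $ r = v $ (2*M+2+r)" if "r < 2*M" for r
    using R1[OF v that, of G \<beta> m0, folded F_def] by (simp add: u_def)
  have c2: "u $ (2*M+a) = - (\<Sum>i<M. u $ (2*i+a))" if "a < 2" for a
  proof -
    have "u $ (2*M+a) = - (\<Sum>i<M. v $ (2*M+2+2*i+a))"
      using R2[OF v that, of G \<beta> m0, folded F_def] by (simp add: u_def)
    also have "\<dots> = - (\<Sum>i<M. u $ (2*i+a))"
      using that by (intro arg_cong[where f=uminus] sum.cong refl) (auto simp: c1 add.assoc)
    finally show ?thesis .
  qed
  have c9: "(\<Sum>i<Suc M. u $ (2*i+a)) = 0" if "a < 2" for a
    using c2[OF that] by simp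
  have c3: "(\<Sum>c<2*M+2. G $$ (2*i+a,c) * u $ c) = 0" if "i < M" "a < 2" for i a
    using R3[OF u that(2) that(1), of G \<beta> m0, folded F_def] Fu0[of "2*M+2+2*i+a"] uy[of "2*i"] uy[of "2*i+1"] that
    by simp
  have c4: "(\<Sum>c<2*M+2. G $$ (2*i+a,c) * v $ c)
       = 2*\<beta>*comp2 m0 a*m1 * u $ (2*i) + 2*\<beta>*comp2 m0 a*m2 * u $ (2*i+1)" if "i < M" "a < 2" for i a
    using R3[OF v that(2) that(1), of G \<beta> m0, folded F_def] Fv[of "2*M+2+2*i+a"] uy[of "2*i+a"] c1[of "2*i"] c1[of "2*i+1"] that cm
    by (simp add: algebra_simps)
  have rs: "(\<Sum>i<Suc M. G $$ (c,2*i+a)) = 0" if "c < 2*Suc M" "a < 2" for c a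
  proof -
    have w: "w \<in> mat_kernel G \<Longrightarrow> (\<Sum>c'<2*Suc M. G $$ (c,c') * w $ c') = 0" for w
      using mv_sum[OF Gc _ that(1), of w] Gc that(1) by (auto simp: mat_kernel_def)
    have k1: "w1 (Suc M) \<in> mat_kernel G" unfolding H2
      by (rule CollectI, rule exI[of _ 1], rule exI[of _ 0], rule exI[of _ 0])
         (auto simp: w1_def w2_def w3_def)
    have k2: "w2 (Suc M) \<in> mat_kernel G" unfolding H2
      by (rule CollectI, rule exI[of _ 0], rule exI[of _ 1], rule exI[of _ 0])
         (auto simp: w1_def w2_def w3_def)
    show ?thesis
    proof (cases "a = 0")
      case True
      have "(\<Sum>c'<2*Suc M. G $$ (c,c') * w1 (Suc M) $ c') = (\<Sum>i<Suc M. G $$ (c,2*i+a))"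
        unfolding sum2 using True by (intro sum.cong refl) (auto simp: w1_def)
      then show ?thesis using w[OF k1] by simp
    next
      case False
      then have a: "a = 1" using that by simp
      have "(\<Sum>c'<2*Suc M. G $$ (c,c') * w2 (Suc M) $ c') = (\<Sum>i<Suc M. G $$ (c,2*i+a))"
        unfolding sum2 using a by (intro sum.cong refl) (auto simp: w2_def)
      then show ?thesis using w[OF k2] by simp
    qed
  qed
  have colsum: "G $$ (2*M+a,c) = - (\<Sum>i<M. G $$ (2*i+a,c))" if "c < 2*Suc M" "a < 2" for c a
  proof -
    have "(\<Sum>i<Suc M. G $$ (2*i+a,c)) = (\<Sum>i<Suc M. G $$ (c,2*i+a))"
      using that by (intro sum.cong refl Gsym) auto
    then have "(\<Sum>i<Suc M. G $$ (2*i+a,c)) = 0" using rs[OF that] by simp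
    then show ?thesis by (simp add: eq_neg_iff_add_eq_0 add.commute)
  qed
  have c5: "(\<Sum>c<2*M+2. G $$ (2*i+a,c) * u $ c) = 0" if "i < Suc M" "a < 2" for i a
  proof (cases "i < M")
    case True then show ?thesis using c3 that by simp
  next
    case False
    then have i: "i = M" using that by simp
    have "(\<Sum>c<2*M+2. G $$ (2*i+a,c) * u $ c) = (\<Sum>c<2*M+2. - (\<Sum>j<M. G $$ (2*j+a,c) * u $ c))"
      unfolding i using that by (intro sum.cong refl) (auto simp: colsum sum_distrib_right)
    also have "\<dots> = - (\<Sum>j<M. \<Sum>c<2*M+2. G $$ (2*j+a,c) * u $ c)"
      by (simp add: sum_negf sum.swap[of _ "{..<M}"])
    also have "\<dots> = 0" using c3 that by simp
    finally show ?thesis .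
  qed
  have c6: "(\<Sum>c<2*M+2. G $$ (2*i+a,c) * v $ c)
       = 2*\<beta>*comp2 m0 a*m1 * u $ (2*i) + 2*\<beta>*comp2 m0 a*m2 * u $ (2*i+1)" if "i < Suc M" "a < 2" for i a
  proof (cases "i < M")
    case True then show ?thesis using c4 that by simp
  next
    case False
    then have i: "i = M" using that by simp
    have "(\<Sum>c<2*M+2. G $$ (2*i+a,c) * v $ c) = (\<Sum>c<2*M+2. - (\<Sum>j<M. G $$ (2*j+a,c) * v $ c))"
      unfolding i using that by (intro sum.cong refl) (auto simp: colsum sum_distrib_right)
    also have "\<dots> = - (\<Sum>j<M. \<Sum>c<2*M+2. G $$ (2*j+a,c) * v $ c)"
      by (simp add: sum_negf sum.swap[of _ "{..<M}"])
    also have "\<dots> = - (\<Sum>j<M. 2*\<beta>*comp2 m0 a*m1 * u $ (2*j) + 2*\<beta>*comp2 m0 a*m2 * u $ (2*j+1))"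
      using c4 that by simp
    also have "\<dots> = 2*\<beta>*comp2 m0 a*m1 * (- (\<Sum>j<M. u $ (2*j+0))) + 2*\<beta>*comp2 m0 a*m2 * (- (\<Sum>j<M. u $ (2*j+1)))"
      by (simp add: sum.distrib sum_distrib_left algebra_simps)
    also have "\<dots> = 2*\<beta>*comp2 m0 a*m1 * u $ (2*i) + 2*\<beta>*comp2 m0 a*m2 * u $ (2*i+1)"
    proof -
      have "u $ (2*M) = - (\<Sum>j<M. u $ (2*j+0))" using c2[of 0] by simp
      moreover have "u $ (2*M+1) = - (\<Sum>j<M. u $ (2*j+1))" using c2[of 1] by simp
      ultimately show ?thesis unfolding i by simp
    qed
    finally show ?thesis .
  qed
  have c5r: "(\<Sum>c<2*M+2. G $$ (r,c) * u $ c) = 0" if "r < 2*Suc M" for r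
  proof -
    have r: "r = 2*(r div 2) + r mod 2" by simp
    have "(\<Sum>c<2*M+2. G $$ (2*(r div 2) + r mod 2,c) * u $ c) = 0"
      by (rule c5) (use that in auto)
    then show ?thesis using r by metis
  qed
  define wx where "wx = vec (2*Suc M) (\<lambda>r. u $ r)"
  have wxk: "wx \<in> mat_kernel G"
    unfolding mat_kernel_def
  proof (intro CollectI conjI)
    show "wx \<in> carrier_vec (dim_col G)" using Gc by (simp add: wx_def)
    show "G *\<^sub>v wx = 0\<^sub>v (dim_row G)"
    proof (rule eq_vecI)
      fix r assume "r < dim_vec (0\<^sub>v (dim_row G) :: real vec)"
      then have r: "r < 2*Suc M" using Gc by simp
      have "(G *\<^sub>v wx) $ r = (\<Sum>c<2*Suc M. G $$ (r,c) * wx $ c)"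
        by (rule mv_sum[OF Gc _ r]) (simp add: wx_def)
      also have "\<dots> = (\<Sum>c<2*M+2. G $$ (r,c) * u $ c)"
        by (intro sum.cong) (auto simp: wx_def)
      also have "\<dots> = 0" using c5r[OF r] .
      finally show "(G *\<^sub>v wx) $ r = 0\<^sub>v (dim_row G) $ r" using r Gc by simp
    qed (use Gc in simp)
  qed
  then obtain al bb cc where wxe: "wx = al \<cdot>\<^sub>v w1 (Suc M) + bb \<cdot>\<^sub>v w2 (Suc M) + cc \<cdot>\<^sub>v w3 (Suc M) xh"
    using H2 by auto
  have ux: "u $ (2*i) = al - cc * snd (xh i)" "u $ (2*i+1) = bb + cc * fst (xh i)" if "i < Suc M" for i
  proof -
    have "wx $ (2*i) = (al \<cdot>\<^sub>v w1 (Suc M) + bb \<cdot>\<^sub>v w2 (Suc M) + cc \<cdot>\<^sub>v w3 (Suc M) xh) $ (2*i)"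
      "wx $ (2*i+1) = (al \<cdot>\<^sub>v w1 (Suc M) + bb \<cdot>\<^sub>v w2 (Suc M) + cc \<cdot>\<^sub>v w3 (Suc M) xh) $ (2*i+1)"
      using wxe by simp_all
    then show "u $ (2*i) = al - cc * snd (xh i)" "u $ (2*i+1) = bb + cc * fst (xh i)"
      using that by (simp_all add: wx_def w1_def w2_def w3_def)
  qed
  have inner1: "(\<Sum>r<2*M+2. u $ r * (\<Sum>c<2*M+2. G $$ (r,c) * v $ c)) = 0"
  proof -
    have "(\<Sum>r<2*M+2. u $ r * (\<Sum>c<2*M+2. G $$ (r,c) * v $ c))
        = (\<Sum>r<2*M+2. \<Sum>c<2*M+2. u $ r * (G $$ (r,c) * v $ c))"
      by (simp only: sum_distrib_left)
    also have "\<dots> = (\<Sum>c<2*M+2. \<Sum>r<2*M+2. u $ r * (G $$ (r,c) * v $ c))"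
      by (rule sum.swap)
    also have "\<dots> = (\<Sum>c<2*M+2. v $ c * (\<Sum>r<2*M+2. G $$ (c,r) * u $ r))"
    proof (intro sum.cong refl)
      fix c assume "c \<in> {..<2*M+2}"
      then have c: "c < 2*Suc M" by simp
      have "(\<Sum>r<2*M+2. u $ r * (G $$ (r,c) * v $ c)) = (\<Sum>r<2*M+2. v $ c * (G $$ (c,r) * u $ r))"
      proof (intro sum.cong refl)
        fix r assume "r \<in> {..<2*M+2}"
        then have r: "r < 2*Suc M" by simp
        show "u $ r * (G $$ (r,c) * v $ c) = v $ c * (G $$ (c,r) * u $ r)"
          using Gsym[OF r c] by simp
      qed
      then show "(\<Sum>r<2*M+2. u $ r * (G $$ (r,c) * v $ c)) = v $ c * (\<Sum>r<2*M+2. G $$ (c,r) * u $ r)"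
        by (simp only: sum_distrib_left)
    qed
    also have "\<dots> = 0"
    proof (intro sum.neutral ballI)
      fix c assume "c \<in> {..<2*M+2}"
      then have c: "c < 2*Suc M" by simp
      show "v $ c * (\<Sum>r<2*M+2. G $$ (c,r) * u $ r) = 0" using c5r[OF c] by simp
    qed
    finally show ?thesis .
  qed
  have e22: "2*Suc M = 2*M+2" by simp
  have inner2: "(\<Sum>r<2*Suc M. u $ r * (\<Sum>c<2*M+2. G $$ (r,c) * v $ c))
      = (\<Sum>i<Suc M. 2*\<beta>*(m1 * u $ (2*i) + m2 * u $ (2*i+1))^2)"
    unfolding sum2
  proof (intro sum.cong refl)
    fix i assume "i \<in> {..<Suc M}"
    then have i: "i < Suc M" by simp
    show "u $ (2*i) * (\<Sum>c<2*M+2. G $$ (2*i,c) * v $ c) + u $ (2*i+1) * (\<Sum>c<2*M+2. G $$ (2*i+1,c) * v $ c)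
        = 2*\<beta>*(m1 * u $ (2*i) + m2 * u $ (2*i+1))^2"
      using c6[OF i, of 0] c6[OF i, of 1] cm by (simp add: power2_eq_square algebra_simps)
  qed
  have perp: "m1 * u $ (2*i) + m2 * u $ (2*i+1) = 0" if "i < Suc M" for i
  proof -
    have "(\<Sum>i<Suc M. 2*\<beta>*(m1 * u $ (2*i) + m2 * u $ (2*i+1))^2) = 0"
      using inner1 inner2 unfolding e22 by simp
    then have "\<forall>i\<in>{..<Suc M}. 2*\<beta>*(m1 * u $ (2*i) + m2 * u $ (2*i+1))^2 = 0"
      by (subst (asm) sum_nonneg_eq_0_iff) (use beta in auto)
    then show ?thesis using that beta by simp
  qed
  have cc0: "cc = 0"
  proof (rule ccontr)
    assume ncc: "cc \<noteq> 0"
    have "collinear (xh ` {0..<Suc M})"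
      unfolding collinear_def
    proof (intro exI[of _ m0] ballI)
      fix p q assume "p \<in> xh ` {0..<Suc M}" "q \<in> xh ` {0..<Suc M}"
      then obtain i j where i: "i < Suc M" and j: "j < Suc M" and p: "p = xh i" and q: "q = xh j" by auto
      define dx where "dx = fst (xh i) - fst (xh j)"
      define dy where "dy = snd (xh i) - snd (xh j)"
      have "m1 * (al - cc * snd (xh i)) + m2 * (bb + cc * fst (xh i)) = 0"
        using perp[OF i] ux[OF i] by simp
      moreover have "m1 * (al - cc * snd (xh j)) + m2 * (bb + cc * fst (xh j)) = 0"
        using perp[OF j] ux[OF j] by simp
      ultimately have "cc * (m2 * dx - m1 * dy) = 0"
        unfolding dx_def dy_def by (simp add: algebra_simps)
      then have key: "m2 * dx = m1 * dy" using ncc by simp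
      have n: "m1^2 + m2^2 > 0" using mpos by (simp add: m1_def m2_def)
      define t where "t = (m1 * dx + m2 * dy) / (m1^2 + m2^2)"
      have e1: "dx = t * m1"
      proof -
        have "dx * (m1^2 + m2^2) = (m1 * dx + m2 * dy) * m1"
          using arg_cong[OF key, of "\<lambda>z. m2 * z"] by (simp add: algebra_simps power2_eq_square)
        then have h: "(m1 * dx + m2 * dy) * m1 = dx * (m1^2 + m2^2)" by simp
        have "t * m1 = (m1 * dx + m2 * dy) * m1 / (m1^2 + m2^2)" unfolding t_def by simp
        also have "\<dots> = dx" unfolding h using n by (simp del: sum_power2_eq_zero_iff)
        finally show ?thesis by simp
      qed
      have e2: "dy = t * m2"
      proof -
        have "dy * (m1^2 + m2^2) = (m1 * dx + m2 * dy) * m2"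
          using arg_cong[OF key, of "\<lambda>z. m1 * z"] by (simp add: algebra_simps power2_eq_square) (metis mult.commute)
        then have h: "(m1 * dx + m2 * dy) * m2 = dy * (m1^2 + m2^2)" by simp
        have "t * m2 = (m1 * dx + m2 * dy) * m2 / (m1^2 + m2^2)" unfolding t_def by simp
        also have "\<dots> = dy" unfolding h using n by (simp del: sum_power2_eq_zero_iff)
        finally show ?thesis by simp
      qed
      show "\<exists>c. p - q = c *\<^sub>R m0"
        using e1 e2 by (intro exI[of _ t]) (simp add: p q prod_eq_iff dx_def dy_def m1_def m2_def)
    qed
    with H4 show False by simp
  qed
  have al0: "al = 0"
  proof -
    have "(\<Sum>i<Suc M. u $ (2*i+0)) = (\<Sum>i<Suc M. al)"
      using ux(1) cc0 by (intro sum.cong refl) simp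
    then have "real (Suc M) * al = 0" using c9[of 0] by simp
    then show ?thesis by simp
  qed
  have bb0: "bb = 0"
  proof -
    have "(\<Sum>i<Suc M. u $ (2*i+1)) = (\<Sum>i<Suc M. bb)"
      using ux(2) cc0 by (intro sum.cong refl) simp
    then have "real (Suc M) * bb = 0" using c9[of 1] by simp
    then show ?thesis by simp
  qed
  have ux0: "u $ r = 0" if "r < 2*M+2" for r
  proof -
    have r: "r = 2*(r div 2) + r mod 2" by simp
    have i: "r div 2 < Suc M" using that by simp
    show ?thesis
    proof (cases "r mod 2 = 0")
      case True
      then have "r = 2*(r div 2)" using r by simp
      then show ?thesis using ux(1)[OF i] cc0 al0 by simp
    next
      case False
      then have "r = 2*(r div 2) + 1" using r by simp
      then show ?thesis using ux(2)[OF i] cc0 bb0 by simp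
    qed
  qed
  have "u = 0\<^sub>v (4*Suc M)"
  proof (rule eq_vecI)
    fix r assume "r < dim_vec (0\<^sub>v (4*Suc M) :: real vec)"
    then have r: "r < 4*Suc M" by simp
    have "u $ r = 0"
    proof (cases "r < 2*M+2")
      case True then show ?thesis using ux0 by simp
    next
      case False
      show ?thesis
      proof (cases "r < 4*M+2")
        case True
        then have "r = 2*M+2+(r - (2*M+2))" "r - (2*M+2) < 2*M" using False by simp_all
        then show ?thesis using uy by metis
      next
        case False2: False
        then have "r = 4*M+2 \<or> r = 4*M+3" using r by (simp add: mult_Suc_right) linarith
        then show ?thesis using uz by auto
      qed
    qed
    then show "u $ r = 0\<^sub>v (4*Suc M) $ r" using r by simp
  qed (use u in simp)
  then show ?thesis unfolding F_def[symmetric] u_def .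
qed


theorem lemma3:
  fixes N :: nat and \<alpha> \<beta> :: real
    and W :: "real \<times> real \<Rightarrow> real" and U :: "real \<Rightarrow> real"
    and gradW :: "real \<times> real \<Rightarrow> real \<times> real"
    and D2W :: "real \<times> real \<Rightarrow> real \<times> real \<Rightarrow> real \<times> real"
    and xh :: "nat \<Rightarrow> real \<times> real" and m0 :: "real \<times> real"
  assumes N2: "N \<ge> 2" and alpha: "\<alpha> > 0" and beta: "\<beta> > 0"
    and radial: "\<forall>x. W x = U (norm x)"
    and C2: "C2_grad_hess W gradW D2W"
    and H1: "\<forall>i<N. (\<Sum>j\<in>{0..<N} - {i}. gradW (xh i - xh j)) = 0"
    and H2_span: "mat_kernel (Gmat N D2W xh) =
         {a \<cdot>\<^sub>v w1 N + b \<cdot>\<^sub>v w2 N + c \<cdot>\<^sub>v w3 N xh | a b c. True}"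
    and H2_indep: "\<forall>a b c. a \<cdot>\<^sub>v w1 N + b \<cdot>\<^sub>v w2 N + c \<cdot>\<^sub>v w3 N xh = 0\<^sub>v (2*N)
                      \<longrightarrow> a = 0 \<and> b = 0 \<and> c = 0"
    and H3: "\<forall>z. eigenvalue (map_mat complex_of_real (Gmat N D2W xh)) z \<and> z \<noteq> 0 \<longrightarrow> Re z < 0"
    and H4: "\<not> collinear (xh ` {0..<N})"
    and m0: "(fst m0)\<^sup>2 + (snd m0)\<^sup>2 = \<alpha> / \<beta>"
  shows "mat_kernel (FBB N (Gmat N D2W xh) \<beta> m0 * FBB N (Gmat N D2W xh) \<beta> m0)
       = mat_kernel (FBB N (Gmat N D2W xh) \<beta> m0)"
proof -
  obtain M where NM: "N = Suc M" using N2 by (cases N) auto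
  have Fc: "FBB N (Gmat N D2W xh) \<beta> m0 \<in> carrier_mat (4*N) (4*N)" by (rule F_carrier)
  have FFc: "FBB N (Gmat N D2W xh) \<beta> m0 * FBB N (Gmat N D2W xh) \<beta> m0 \<in> carrier_mat (4*N) (4*N)"
    using Fc by simp
  have mpos: "(fst m0)\<^sup>2 + (snd m0)\<^sup>2 > 0" using m0 alpha beta by simp
  show ?thesis
  proof
    show "mat_kernel (FBB N (Gmat N D2W xh) \<beta> m0 * FBB N (Gmat N D2W xh) \<beta> m0)
        \<subseteq> mat_kernel (FBB N (Gmat N D2W xh) \<beta> m0)"
    proof
      fix v assume "v \<in> mat_kernel (FBB N (Gmat N D2W xh) \<beta> m0 * FBB N (Gmat N D2W xh) \<beta> m0)"
      then have v: "v \<in> carrier_vec (4*N)"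
        and vk0: "(FBB N (Gmat N D2W xh) \<beta> m0 * FBB N (Gmat N D2W xh) \<beta> m0) *\<^sub>v v = 0\<^sub>v (4*N)"
        using FFc by (auto simp: mat_kernel_def)
      have vk: "FBB N (Gmat N D2W xh) \<beta> m0 *\<^sub>v (FBB N (Gmat N D2W xh) \<beta> m0 *\<^sub>v v) = 0\<^sub>v (4*N)"
        using vk0 Fc v by simp
      have "FBB (Suc M) (Gmat (Suc M) D2W xh) \<beta> m0 *\<^sub>v v = 0\<^sub>v (4*Suc M)"
      proof (rule core[where xh=xh])
        show "Gmat (Suc M) D2W xh \<in> carrier_mat (2*Suc M) (2*Suc M)" by (rule G_carrier)
        show "Gmat (Suc M) D2W xh $$ (r,c) = Gmat (Suc M) D2W xh $$ (c,r)"
          if "r < 2*Suc M" "c < 2*Suc M" for r c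
          by (rule G_sym[OF C2 radial that])
        show "mat_kernel (Gmat (Suc M) D2W xh) =
          {a \<cdot>\<^sub>v w1 (Suc M) + b \<cdot>\<^sub>v w2 (Suc M) + c \<cdot>\<^sub>v w3 (Suc M) xh | a b c. True}"
          using H2_span unfolding NM .
        show "\<not> collinear (xh ` {0..<Suc M})" using H4 unfolding NM .
        show "\<beta> > 0" by (rule beta)
        show "(fst m0)\<^sup>2 + (snd m0)\<^sup>2 > 0" by (rule mpos)
        show "v \<in> carrier_vec (4*Suc M)" using v unfolding NM .
        show "FBB (Suc M) (Gmat (Suc M) D2W xh) \<beta> m0 *\<^sub>v (FBB (Suc M) (Gmat (Suc M) D2W xh) \<beta> m0 *\<^sub>v v)
            = 0\<^sub>v (4*Suc M)" using vk unfolding NM .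
      qed
      then have "FBB N (Gmat N D2W xh) \<beta> m0 *\<^sub>v v = 0\<^sub>v (4*N)" unfolding NM .
      then show "v \<in> mat_kernel (FBB N (Gmat N D2W xh) \<beta> m0)"
        using v Fc by (auto simp: mat_kernel_def)
    qed
    show "mat_kernel (FBB N (Gmat N D2W xh) \<beta> m0)
        \<subseteq> mat_kernel (FBB N (Gmat N D2W xh) \<beta> m0 * FBB N (Gmat N D2W xh) \<beta> m0)"
    proof
      fix v assume "v \<in> mat_kernel (FBB N (Gmat N D2W xh) \<beta> m0)"
      then have v: "v \<in> carrier_vec (4*N)"
        and vk: "FBB N (Gmat N D2W xh) \<beta> m0 *\<^sub>v v = 0\<^sub>v (4*N)"
        using Fc by (auto simp: mat_kernel_def)
      have z: "FBB N (Gmat N D2W xh) \<beta> m0 *\<^sub>v 0\<^sub>v (4*N) = 0\<^sub>v (4*N)"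
      proof (rule eq_vecI)
        fix i assume "i < dim_vec (0\<^sub>v (4*N) :: real vec)"
        then have i: "i < 4*N" by simp
        show "(FBB N (Gmat N D2W xh) \<beta> m0 *\<^sub>v 0\<^sub>v (4*N)) $ i = 0\<^sub>v (4*N) $ i"
          using mv_sum[OF Fc _ i, of "0\<^sub>v (4*N)"] i by simp
      qed (use Fc in simp)
      have "(FBB N (Gmat N D2W xh) \<beta> m0 * FBB N (Gmat N D2W xh) \<beta> m0) *\<^sub>v v = 0\<^sub>v (4*N)"
        using vk Fc v z by simp
      then show "v \<in> mat_kernel (FBB N (Gmat N D2W xh) \<beta> m0 * FBB N (Gmat N D2W xh) \<beta> m0)"
        using v FFc by (auto simp: mat_kernel_def)
    qed
  qed
qed

end
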